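(* Let $\phi_1,\ldots,\phi_N\in\mathbb{R}^D$, $\Phi=(\phi_1,\ldots,\phi_N)\in\mathbb{R}^{D\times N}$, $t\in\{0,1\}^N$, $\sigma(a)=1/(1+e^{-a})$, $y(\theta)=(\sigma(\theta^{\rm T}\phi_n))_{n=1}^N$, and $\Psi_{\rm data}(\theta)=-\sum_{n=1}^N\{t_n\ln y_n(\theta)+(1-t_n)\ln(1-y_n(\theta))\}$. For an ensemble $\theta^{(1)},\ldots,\theta^{(M)}\in\mathbb{R}^D$ let $\hat m=\frac1M\sum_j\theta^{(j)}$, $\hat\Sigma=\frac1{M-1}\sum_j(\theta^{(j)}-\hat m)(\theta^{(j)}-\hat m)^{\rm T}$, and $$\Psi_{\rm KBF}(\theta^{(1)},\ldots,\theta^{(M)})=\frac12\sum_{j=1}^M\Psi_{\rm data}(\theta^{(j)})+\frac M2\Psi_{\rm data}\Big(\frac1M\sum_{j=1}^M\theta^{(j)}\Big).$$ Then the EnKBF equations $$\frac{\rm d}{{\rm d}\tau}\theta^{(i)}_\tau=-\frac12\hat\Sigma_\tau\Phi\big(y(\theta^{(i)}_\tau)+y(\hat m_\tau)-2t\big),\qquad i=1,\ldots,M,$$ have the gradient structure $$\frac{\rm d}{{\rm d}\tau}\theta^{(i)}_\tau=-\hat\Sigma_\tau\nabla_{\theta^{(i)}}\Psi_{\rm KBF}(\theta^{(1)}_\tau,\ldots,\theta^{(M)}_\tau),\qquad i=1,\ldots,M,$$ where $\nabla_{\theta^{(i)}}$ denotes the gradient with respect to the $i$-th argument (the mean $\hat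 m$ inside $\Psi_{\rm KBF}$ being regarded as a function of the ensemble). *)

theory Defs
  imports "HOL-Analysis.Analysis"
begin

definition sigmoid :: "real \<Rightarrow> real" where
  "sigmoid a = 1 / (1 + exp (- a))"

definition Phi_mat :: "('n::finite \<Rightarrow> real^'d::finite) \<Rightarrow> real^'n^'d" where
  "Phi_mat \<phi> = (\<chi> d n. \<phi> n $ d)"

definition yvec :: "('n::finite \<Rightarrow> real^'d::finite) \<Rightarrow> real^'d \<Rightarrow> real^'n" where
  "yvec \<phi> \<theta> = (\<chi> n. sigmoid (\<theta> \<bullet> \<phi> n))"

definition Psi_data :: "('n::finite \<Rightarrow> real^'d::finite) \<Rightarrow> real^'n \<Rightarrow> real^'d \<Rightarrow> real" where
  "Psi_data \<phi> t \<theta> =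
     - (\<Sum>n\<in>UNIV. t $ n * ln (yvec \<phi> \<theta> $ n) + (1 - t $ n) * ln (1 - yvec \<phi> \<theta> $ n))"

definition ens_mean :: "('m::finite \<Rightarrow> real^'d::finite) \<Rightarrow> real^'d" where
  "ens_mean \<theta>s = (1 / real CARD('m)) *\<^sub>R (\<Sum>j\<in>UNIV. \<theta>s j)"

definition outer_prod :: "real^'d::finite \<Rightarrow> real^'d \<Rightarrow> real^'d^'d" where
  "outer_prod u v = (\<chi> a b. u $ a * v $ b)"

definition ens_cov :: "('m::finite \<Rightarrow> real^'d::finite) \<Rightarrow> real^'d^'d" where
  "ens_cov \<theta>s = (1 / (real CARD('m) - 1)) *\<^sub>R
      (\<Sum>j\<in>UNIV. outer_prod (\<theta>s j - ens_mean \<theta>s) (\<theta>s j - ens_mean \<theta>s))"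

definition Psi_KBF :: "('n::finite \<Rightarrow> real^'d::finite) \<Rightarrow> real^'n \<Rightarrow> ('m::finite \<Rightarrow> real^'d) \<Rightarrow> real" where
  "Psi_KBF \<phi> t \<theta>s = (1/2) * (\<Sum>j\<in>UNIV. Psi_data \<phi> t (\<theta>s j))
      + (real CARD('m) / 2) * Psi_data \<phi> t (ens_mean \<theta>s)"

end

theory Submission
  imports Defs
begin

lemma ln_sig: "ln (sigmoid a) = - ln (1 + exp (- a))"
  unfolding sigmoid_def by (simp add: ln_div add_pos_pos)

lemma ln_one_minus_sig: "ln (1 - sigmoid a) = - a - ln (1 + exp (- a))"
proof -
  have p: "1 + exp (- a) > 0" by (simp add: add_pos_pos)
  have "1 - sigmoid a = exp (- a) / (1 + exp (- a))"
    unfolding sigmoid_def using p by (simp add: field_simps)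
  then show ?thesis using p by (simp add: ln_div)
qed

lemma d_scalar:
  "((\<lambda>a. tn * ln (sigmoid a) + (1 - tn) * ln (1 - sigmoid a)) has_real_derivative (tn - sigmoid a)) (at a)"
proof -
  have eq: "(\<lambda>a. tn * ln (sigmoid a) + (1 - tn) * ln (1 - sigmoid a))
        = (\<lambda>a. - ln (1 + exp (- a)) - (1 - tn) * a)"
    by (rule ext) (simp add: ln_sig ln_one_minus_sig algebra_simps)
  have p: "1 + exp (- a) > 0" by (simp add: add_pos_pos)
  have "((\<lambda>a. - ln (1 + exp (- a)) - (1 - tn) * a) has_real_derivative
        (- ((0 + exp (- a) * (- 1)) / (1 + exp (- a))) - (1 - tn) * 1)) (at a)"
    using p by (auto intro!: derivative_eq_intros)
  moreover have "- ((0 + exp (- a) * (- 1)) / (1 + exp (- a))) - (1 - tn) * 1 = tn - sigmoid a"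
    unfolding sigmoid_def using p by (simp add: field_simps)
  ultimately show ?thesis unfolding eq by (simp only:)
qed

lemma d_data:
  "(Psi_data \<phi> t has_derivative
     (\<lambda>h. \<Sum>n\<in>UNIV. (sigmoid (\<theta> \<bullet> \<phi> n) - t $ n) * (h \<bullet> \<phi> n))) (at \<theta>)"
proof -
  have fn: "((\<lambda>x. t $ n * ln (sigmoid (x \<bullet> \<phi> n)) + (1 - t $ n) * ln (1 - sigmoid (x \<bullet> \<phi> n)))
      has_derivative (\<lambda>h. (t $ n - sigmoid (\<theta> \<bullet> \<phi> n)) * (h \<bullet> \<phi> n))) (at \<theta>)" for n
    using has_derivative_compose[OF has_derivative_inner_left[OF has_derivative_ident]
        has_field_derivative_imp_has_derivative[OF d_scalar[of "t $ n" "\<theta> \<bullet> \<phi> n"]]]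
    by simp
  have "((\<lambda>x. - (\<Sum>n\<in>UNIV. t $ n * ln (sigmoid (x \<bullet> \<phi> n)) + (1 - t $ n) * ln (1 - sigmoid (x \<bullet> \<phi> n))))
      has_derivative (\<lambda>h. - (\<Sum>n\<in>UNIV. (t $ n - sigmoid (\<theta> \<bullet> \<phi> n)) * (h \<bullet> \<phi> n)))) (at \<theta>)"
    by (intro has_derivative_minus has_derivative_sum fn)
  moreover have "(\<lambda>h. - (\<Sum>n\<in>UNIV. (t $ n - sigmoid (\<theta> \<bullet> \<phi> n)) * (h \<bullet> \<phi> n)))
     = (\<lambda>h. \<Sum>n\<in>UNIV. (sigmoid (\<theta> \<bullet> \<phi> n) - t $ n) * (h \<bullet> \<phi> n))"
    by (rule ext) (simp add: sum_negf[symmetric] algebra_simps)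
  ultimately show ?thesis
    unfolding Psi_data_def yvec_def by simp
qed

lemma grad_inner:
  "(Phi_mat \<phi> *v (yvec \<phi> \<theta> - t)) \<bullet> h = (\<Sum>n\<in>UNIV. (sigmoid (\<theta> \<bullet> \<phi> n) - t $ n) * (h \<bullet> \<phi> n))"
proof -
  have "(Phi_mat \<phi> *v (yvec \<phi> \<theta> - t)) \<bullet> h
     = (\<Sum>d\<in>UNIV. \<Sum>n\<in>UNIV. (\<phi> n $ d * (sigmoid (\<theta> \<bullet> \<phi> n) - t $ n)) * h $ d)"
    unfolding Phi_mat_def yvec_def matrix_vector_mult_def inner_vec_def
    by (simp add: sum_distrib_right)
  also have "\<dots> = (\<Sum>n\<in>UNIV. \<Sum>d\<in>UNIV. (\<phi> n $ d * (sigmoid (\<theta> \<bullet> \<phi> n) - t $ n)) * h $ d)"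
    by (rule sum.swap)
  also have "\<dots> = (\<Sum>n\<in>UNIV. (sigmoid (\<theta> \<bullet> \<phi> n) - t $ n) * (h \<bullet> \<phi> n))"
    by (rule sum.cong[OF refl]) (simp add: inner_vec_def sum_distrib_right mult_ac)
  finally show ?thesis .
qed

theorem mainTheorem4:
  fixes \<phi> :: "'n::finite \<Rightarrow> real^'d::finite"
    and t :: "real^'n"
    and \<theta>s :: "'m::finite \<Rightarrow> real^'d"
    and i :: 'm
  assumes "\<forall>n. t $ n \<in> {0, 1}"
  shows "\<exists>g. ((\<lambda>x. Psi_KBF \<phi> t (\<theta>s(i := x))) has_derivative (\<lambda>h. g \<bullet> h)) (at (\<theta>s i))
           \<and> - (ens_cov \<theta>s *v g)
             = - ((1/2) *\<^sub>R (ens_cov \<theta>s *v (Phi_mat \<phi> *v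
                   (yvec \<phi> (\<theta>s i) + yvec \<phi> (ens_mean \<theta>s) - 2 *\<^sub>R t))))"
proof -
  define M where "M = real CARD('m)"
  have M0: "M > 0" unfolding M_def by simp
  define F where "F = Psi_data \<phi> t"
  define C where "C = (\<Sum>j\<in>UNIV - {i}. F (\<theta>s j))"
  define c0 where "c0 = (1 / M) *\<^sub>R (\<Sum>j\<in>UNIV - {i}. \<theta>s j)"
  define m where "m = ens_mean \<theta>s"
  have sF: "(\<Sum>j\<in>UNIV. F ((\<theta>s(i := x)) j)) = F x + C" for x
    unfolding C_def by (simp add: sum.remove[of UNIV i])
  have sT: "(\<Sum>j\<in>UNIV. (\<theta>s(i := x)) j) = x + (\<Sum>j\<in>UNIV - {i}. \<theta>s j)" for x
    by (simp add: sum.remove[of UNIV i])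
  have mean: "ens_mean (\<theta>s(i := x)) = c0 + (1 / M) *\<^sub>R x" for x
    unfolding ens_mean_def c0_def M_def sT by (simp add: algebra_simps)
  have m_eq: "c0 + (1 / M) *\<^sub>R \<theta>s i = m"
    using mean[of "\<theta>s i"] unfolding m_def by simp
  have eqf: "(\<lambda>x. Psi_KBF \<phi> t (\<theta>s(i := x)))
     = (\<lambda>x. (1/2) * F x + (1/2) * C + (M / 2) * F (c0 + (1 / M) *\<^sub>R x))"
    by (rule ext) (simp only: Psi_KBF_def F_def[symmetric] sF mean M_def[symmetric]; simp add: algebra_simps)
  define g where "g = (1/2) *\<^sub>R (Phi_mat \<phi> *v
                   (yvec \<phi> (\<theta>s i) + yvec \<phi> (ens_mean \<theta>s) - 2 *\<^sub>R t))"
  have dmean: "((\<lambda>x. c0 + (1 / M) *\<^sub>R x) has_derivative (\<lambda>h. (1 / M) *\<^sub>R h)) (at (\<theta>s i))"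
    by (auto intro!: derivative_eq_intros)
  have d2: "((\<lambda>x. F (c0 + (1 / M) *\<^sub>R x)) has_derivative
     (\<lambda>h. \<Sum>n\<in>UNIV. (sigmoid (m \<bullet> \<phi> n) - t $ n) * (((1 / M) *\<^sub>R h) \<bullet> \<phi> n))) (at (\<theta>s i))"
    using has_derivative_compose[OF dmean d_data[of \<phi> t "c0 + (1 / M) *\<^sub>R \<theta>s i"]]
    unfolding F_def m_eq by simp
  have d1: "(F has_derivative
     (\<lambda>h. \<Sum>n\<in>UNIV. (sigmoid (\<theta>s i \<bullet> \<phi> n) - t $ n) * (h \<bullet> \<phi> n))) (at (\<theta>s i))"
    unfolding F_def by (rule d_data)
  have dall: "((\<lambda>x. (1/2) * F x + (1/2) * C + (M / 2) * F (c0 + (1 / M) *\<^sub>R x)) has_derivative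
     (\<lambda>h. (1/2) * (\<Sum>n\<in>UNIV. (sigmoid (\<theta>s i \<bullet> \<phi> n) - t $ n) * (h \<bullet> \<phi> n)) + 0 +
        (M / 2) * (\<Sum>n\<in>UNIV. (sigmoid (m \<bullet> \<phi> n) - t $ n) * (((1 / M) *\<^sub>R h) \<bullet> \<phi> n)))) (at (\<theta>s i))"
    by (intro has_derivative_add has_derivative_mult_right d1 d2 has_derivative_const)
  have glin: "(\<lambda>h. (1/2) * (\<Sum>n\<in>UNIV. (sigmoid (\<theta>s i \<bullet> \<phi> n) - t $ n) * (h \<bullet> \<phi> n)) + 0 +
        (M / 2) * (\<Sum>n\<in>UNIV. (sigmoid (m \<bullet> \<phi> n) - t $ n) * (((1 / M) *\<^sub>R h) \<bullet> \<phi> n)))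
      = (\<lambda>h. g \<bullet> h)"
  proof (rule ext)
    fix h
    have split: "yvec \<phi> (\<theta>s i) + yvec \<phi> m - 2 *\<^sub>R t = (yvec \<phi> (\<theta>s i) - t) + (yvec \<phi> m - t)"
      by (simp add: algebra_simps scaleR_2)
    have "g \<bullet> h = (1/2) * ((Phi_mat \<phi> *v (yvec \<phi> (\<theta>s i) - t)) \<bullet> h + (Phi_mat \<phi> *v (yvec \<phi> m - t)) \<bullet> h)"
      unfolding g_def m_def[symmetric] split matrix_vector_right_distrib
      by (simp only: inner_add_left inner_scaleR_left)
    also have "\<dots> = (1/2) * (\<Sum>n\<in>UNIV. (sigmoid (\<theta>s i \<bullet> \<phi> n) - t $ n) * (h \<bullet> \<phi> n))
        + (1/2) * (\<Sum>n\<in>UNIV. (sigmoid (m \<bullet> \<phi> n) - t $ n) * (h \<bullet> \<phi> n))"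
      unfolding grad_inner by (simp add: algebra_simps)
    also have "(M / 2) * (\<Sum>n\<in>UNIV. (sigmoid (m \<bullet> \<phi> n) - t $ n) * (((1 / M) *\<^sub>R h) \<bullet> \<phi> n))
        = (1/2) * (\<Sum>n\<in>UNIV. (sigmoid (m \<bullet> \<phi> n) - t $ n) * (h \<bullet> \<phi> n))"
      using M0 by (simp add: sum_distrib_left)
    ultimately show "(1/2) * (\<Sum>n\<in>UNIV. (sigmoid (\<theta>s i \<bullet> \<phi> n) - t $ n) * (h \<bullet> \<phi> n)) + 0 +
        (M / 2) * (\<Sum>n\<in>UNIV. (sigmoid (m \<bullet> \<phi> n) - t $ n) * (((1 / M) *\<^sub>R h) \<bullet> \<phi> n)) = g \<bullet> h"
      by simp
  qed
  show ?thesis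
  proof (rule exI[of _ g], rule conjI)
    show "((\<lambda>x. Psi_KBF \<phi> t (\<theta>s(i := x))) has_derivative (\<lambda>h. g \<bullet> h)) (at (\<theta>s i))"
      using dall unfolding eqf glin .
    show "- (ens_cov \<theta>s *v g) = - ((1/2) *\<^sub>R (ens_cov \<theta>s *v (Phi_mat \<phi> *v
                   (yvec \<phi> (\<theta>s i) + yvec \<phi> (ens_mean \<theta>s) - 2 *\<^sub>R t))))"
      unfolding g_def by (simp add: matrix_vector_mult_scaleR)
  qed
qed

end
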